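(* For $n\ge 2$ let $f(n)$ be the maximum of $\sigma_t(G)/\sigma(G)$ over all connected non-regular graphs $G$ of order $n$ (defined for those $n$ for which such graphs exist, i.e. $n \ge 3$). Then $f(n)\le \sqrt{1.5}\, n^{5/2}$ for all such $n$, and $f(n)=\Omega(n^{5/2})$; hence $f(n)=\Theta(n^{5/2})$. In particular, every connected graph $G$ of order $n$ satisfies $\sigma_t(G)\le \sqrt{1.5}\,n^{5/2}\,\sigma(G)$, and there exist connected graphs for which $\sigma_t(G)/\sigma(G)\ge c\,n^{5/2}$ for some absolute constant $c>0$, for all sufficiently large $n$.
   Context: For a graph $G=(V,E)$ with vertex degrees $d(\cdot)$: $\sigma(G)=\sum_{uv\in E}(d(u)-d(v))^2$ (sum over edges) and $\sigma_t(G)=\sum_{\{u,v\}\subseteq V}(d(u)-d(v))^2$ (sum over all unordered pairs of distinct vertices). A connected graph is non-regular iff $\sigma(G)>0$. *)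

theory Defs
  imports Complex_Main
begin

definition simple_graph :: "'a set \<Rightarrow> 'a set set \<Rightarrow> bool" where
  "simple_graph V E \<longleftrightarrow> finite V \<and> (\<forall>e\<in>E. e \<subseteq> V \<and> card e = 2)"

definition degree :: "'a set set \<Rightarrow> 'a \<Rightarrow> nat" where
  "degree E v = card {e\<in>E. v \<in> e}"

definition adj_rel :: "'a set set \<Rightarrow> ('a \<times> 'a) set" where
  "adj_rel E = {(u,v). {u,v} \<in> E}"

definition connected_graph :: "'a set \<Rightarrow> 'a set set \<Rightarrow> bool" where
  "connected_graph V E \<longleftrightarrow> simple_graph V E \<and> V \<noteq> {} \<and>
     (\<forall>u\<in>V. \<forall>v\<in>V. (u,v) \<in> (adj_rel E)\<^sup>*)"

definition regular_graph :: "'a set \<Rightarrow> 'a set set \<Rightarrow> bool" where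
  "regular_graph V E \<longleftrightarrow> (\<forall>u\<in>V. \<forall>v\<in>V. degree E u = degree E v)"

text \<open>sigma: sum over edges uv of (d(u)-d(v))^2; each edge {u,v} is counted twice
  as ordered pair, hence the division by 2.\<close>
definition sigma :: "'a set \<Rightarrow> 'a set set \<Rightarrow> real" where
  "sigma V E = (\<Sum>u\<in>V. \<Sum>v\<in>V. if {u,v} \<in> E
      then (real (degree E u) - real (degree E v))^2 else 0) / 2"

text \<open>sigma_t: sum over unordered pairs of distinct vertices (diagonal terms vanish).\<close>
definition sigma_t :: "'a set \<Rightarrow> 'a set set \<Rightarrow> real" where
  "sigma_t V E = (\<Sum>u\<in>V. \<Sum>v\<in>V. (real (degree E u) - real (degree E v))^2) / 2"

text \<open>f(n): maximum of sigma_t/sigma over connected non-regular graphs of order n;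
  every graph of order n is isomorphic to one on {0..<n}.\<close>
definition f_max :: "nat \<Rightarrow> real" where
  "f_max n = Max {sigma_t {0..<n} E / sigma {0..<n} E | E.
       connected_graph {0..<n} E \<and> \<not> regular_graph {0..<n} E}"

end

theory Submission
  imports Defs
begin



lemma cs_sum:
  fixes x :: "nat \<Rightarrow> real"
  shows "(\<Sum>i<m. x i)^2 \<le> real m * (\<Sum>i<m. (x i)^2)"
proof -
  have "0 \<le> (\<Sum>i<m. \<Sum>j<m. (x i - x j)^2)" by (intro sum_nonneg) auto
  also have "(\<Sum>i<m. \<Sum>j<m. (x i - x j)^2) = (\<Sum>i<m. \<Sum>j<m. (x i)^2 + (x j)^2 - 2 * x i * x j)"
    by (simp add: power2_diff)
  also have "\<dots> = 2 * (real m * (\<Sum>i<m. (x i)^2)) - 2 * (\<Sum>i<m. x i)^2"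
    by (simp add: sum.distrib sum_subtractf sum_distrib_left sum_distrib_right power2_eq_square
        mult.assoc mult.left_commute algebra_simps)
  finally show ?thesis by simp
qed

lemma deg_nbrs:
  assumes "simple_graph V E"
  shows "degree E w = card {v\<in>V. {w,v} \<in> E}"
proof -
  have sub: "\<And>e. e \<in> E \<Longrightarrow> e \<subseteq> V \<and> card e = 2" using assms by (auto simp: simple_graph_def)
  have "{e\<in>E. w \<in> e} = (\<lambda>v. {w,v}) ` {v\<in>V. {w,v} \<in> E}"
  proof
    show "{e\<in>E. w \<in> e} \<subseteq> (\<lambda>v. {w,v}) ` {v\<in>V. {w,v} \<in> E}"
    proof
      fix e assume e: "e \<in> {e\<in>E. w \<in> e}"
      then obtain x y where xy: "e = {x,y}" "x \<noteq> y" using sub[of e] by (auto simp: card_2_iff)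
      show "e \<in> (\<lambda>v. {w,v}) ` {v\<in>V. {w,v} \<in> E}"
      proof (cases "w = x")
        case True
        then show ?thesis using e xy sub[of e] by (auto intro!: image_eqI[where x=y])
      next
        case False
        then have "w = y" using e xy by auto
        then show ?thesis using e xy sub[of e] by (auto simp: insert_commute intro!: image_eqI[where x=x])
      qed
    qed
  qed auto
  moreover have "inj_on (\<lambda>v. {w,v}) {v\<in>V. {w,v} \<in> E}"
  proof (rule inj_onI)
    fix u v assume u: "u \<in> {v\<in>V. {w,v} \<in> E}" and v: "v \<in> {v\<in>V. {w,v} \<in> E}" and eq: "{w,u} = {w,v}"
    have "u \<noteq> w" using u sub[of "{w,u}"] by (auto)
    then show "u = v" using eq by (auto simp: doubleton_eq_iff)
  qed
  ultimately show ?thesis unfolding degree_def by (simp add: card_image)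
qed




lemma min_path:
  assumes "(b,a) \<in> (adj_rel E)\<^sup>*"
  obtains L y where "y 0 = b" "y L = a" "\<forall>i<L. {y i, y (Suc i)} \<in> E" "inj_on y {0..L}"
    "\<forall>v. card {j. j \<le> L \<and> {y j, v} \<in> E} \<le> 3"
proof -
  let ?P = "\<lambda>L. \<exists>y. y 0 = b \<and> y L = a \<and> (\<forall>i<L. {y i, y (Suc i)} \<in> E)"
  have ex: "\<exists>L. ?P L"
  proof -
    obtain n where "(b,a) \<in> (adj_rel E) ^^ n" using assms rtrancl_power by blast
    then show ?thesis unfolding relpow_fun_conv adj_rel_def by auto
  qed
  define L where "L = (LEAST L. ?P L)"
  have PL: "?P L" unfolding L_def by (rule LeastI_ex[OF ex])
  have minL: "\<And>L'. ?P L' \<Longrightarrow> L \<le> L'" unfolding L_def by (rule Least_le)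
  obtain y where y0: "y 0 = b" and yL: "y L = a" and ye: "\<forall>i<L. {y i, y (Suc i)} \<in> E"
    using PL by blast
  have inj: "inj_on y {0..L}"
  proof (rule ccontr)
    assume "\<not> inj_on y {0..L}"
    then obtain i k where ik: "i < k" "k \<le> L" "y i = y k"
      unfolding inj_on_def by (metis atLeastAtMost_iff linorder_neqE_nat)
    define z where "z j = (if j \<le> i then y j else y (j + (k - i)))" for j
    have "?P (L - (k - i))"
    proof (intro exI conjI allI impI)
      show "z 0 = b" using y0 by (simp add: z_def)
      show "z (L - (k - i)) = a"
      proof (cases "k = L")
        case True then show ?thesis using ik yL by (simp add: z_def)
      next
        case False then have "\<not> L - (k - i) \<le> i" using ik by linarith
        then show ?thesis using ik yL by (simp add: z_def)
      qed
      fix j assume j: "j < L - (k - i)"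
      show "{z j, z (Suc j)} \<in> E"
      proof (cases "j < i")
        case True then show ?thesis using ye ik by (auto simp: z_def)
      next
        case False
        show ?thesis
        proof (cases "j = i")
          case True
          then have "z j = y k" "z (Suc j) = y (Suc k)" using ik by (auto simp: z_def)
          then show ?thesis using ye ik j True by auto
        next
          case False
          then have "z j = y (j + (k - i))" "z (Suc j) = y (Suc (j + (k - i)))"
            using \<open>\<not> j < i\<close> by (auto simp: z_def)
          then show ?thesis using ye j ik by auto
        qed
      qed
    qed
    then have "L \<le> L - (k - i)" by (rule minL)
    then show False using ik by linarith
  qed
  have card3: "card {j. j \<le> L \<and> {y j, v} \<in> E} \<le> 3" for v
  proof (cases "{j. j \<le> L \<and> {y j, v} \<in> E} = {}")
    case True then show ?thesis by (simp only: card.empty)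
  next
    case False
    let ?J = "{j. j \<le> L \<and> {y j, v} \<in> E}"
    have fin: "finite ?J" by (rule finite_subset[of _ "{..L}"]) auto
    define i where "i = Min ?J"
    have iJ: "i \<in> ?J" using fin False unfolding i_def by (rule Min_in)
    have "?J \<subseteq> {i, Suc i, Suc (Suc i)}"
    proof
      fix k assume kJ: "k \<in> ?J"
      have ik: "i \<le> k" using fin kJ unfolding i_def by simp
      have "k < i + 3"
      proof (rule ccontr)
        assume "\<not> k < i + 3"
        define z where "z j = (if j \<le> i then y j else if j = Suc i then v else y (j - (i+2) + k))" for j
        have "?P (i + 2 + (L - k))"
        proof (intro exI conjI allI impI)
          show "z 0 = b" using y0 by (simp add: z_def)
          show "z (i + 2 + (L - k)) = a" using kJ yL by (auto simp: z_def)
          fix j assume j: "j < i + 2 + (L - k)"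
          show "{z j, z (Suc j)} \<in> E"
          proof (cases "j < i")
            case True then show ?thesis using ye iJ kJ by (auto simp: z_def)
          next
            case False
            show ?thesis
            proof (cases "j = i")
              case True
              then show ?thesis using iJ by (auto simp: z_def)
            next
              case False
              show ?thesis
              proof (cases "j = Suc i")
                case True
                then show ?thesis using kJ by (auto simp: z_def insert_commute)
              next
                case False
                have jj: "i + 2 \<le> j" using \<open>\<not> j < i\<close> \<open>j \<noteq> i\<close> False by linarith
                have ar: "Suc j - (i+2) + k = Suc (j - (i+2) + k)" using jj by linarith
                have "z j = y (j - (i+2) + k)" "z (Suc j) = y (Suc (j - (i+2) + k))"
                  using jj ar by (auto simp: z_def)
                moreover have "j - (i+2) + k < L" using j jj kJ by linarith
                ultimately show ?thesis using ye by auto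
              qed
            qed
          qed
        qed
        then have "L \<le> i + 2 + (L - k)" by (rule minL)
        then show False using \<open>\<not> k < i + 3\<close> kJ by auto
      qed
      then show "k \<in> {i, Suc i, Suc (Suc i)}" using ik by auto
    qed
    then have "card ?J \<le> card {i, Suc i, Suc (Suc i)}" by (rule card_mono[rotated]) simp
    also have "\<dots> \<le> 3" by (simp add: card_insert_if)
    finally show ?thesis .
  qed
  show ?thesis using that y0 yL ye inj card3 by blast
qed




lemma popov:
  fixes x :: "'a \<Rightarrow> real"
  assumes fin: "finite V" and b: "\<And>u. u \<in> V \<Longrightarrow> lo \<le> x u \<and> x u \<le> hi"
  shows "(\<Sum>u\<in>V. \<Sum>v\<in>V. (x u - x v)^2) / 2 \<le> (real (card V))^2 * (hi - lo)^2 / 4"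
proof -
  define w where "w u = x u - lo" for u
  define s where "s = (\<Sum>u\<in>V. w u)"
  define q where "q = (\<Sum>u\<in>V. (w u)^2)"
  define n where "n = real (card V)"
  have "(\<Sum>u\<in>V. \<Sum>v\<in>V. (x u - x v)^2) = (\<Sum>u\<in>V. \<Sum>v\<in>V. (w u)^2 + (w v)^2 - 2 * w u * w v)"
    by (intro sum.cong refl) (simp add: w_def power2_eq_square algebra_simps)
  also have "\<dots> = 2 * n * q - 2 * s^2"
    by (simp add: sum.distrib sum_subtractf sum_distrib_left sum_distrib_right power2_eq_square
        q_def s_def n_def algebra_simps)
  finally have eq: "(\<Sum>u\<in>V. \<Sum>v\<in>V. (x u - x v)^2) = 2 * n * q - 2 * s^2" .
  have "q \<le> (\<Sum>u\<in>V. (hi - lo) * w u)" unfolding q_def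
  proof (rule sum_mono)
    fix u assume "u \<in> V"
    then have "0 \<le> w u" "w u \<le> hi - lo" using b[of u] by (auto simp: w_def)
    then show "(w u)^2 \<le> (hi - lo) * w u" by (simp add: power2_eq_square mult_right_mono)
  qed
  then have qs: "q \<le> (hi - lo) * s" by (simp add: s_def sum_distrib_left)
  have n0: "0 \<le> n" by (simp add: n_def)
  have "n * q - s^2 \<le> n * ((hi - lo) * s) - s^2" using qs n0 by (simp add: mult_left_mono)
  also have "\<dots> \<le> n^2 * (hi - lo)^2 / 4"
  proof -
    have "n^2*(hi-lo)^2/4 - (n*((hi-lo)*s) - s^2) = (n*(hi-lo)/2 - s)^2"
      by (simp add: power2_eq_square field_simps)
    moreover have "0 \<le> (n*(hi-lo)/2 - s)^2" by simp
    ultimately show ?thesis by linarith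
  qed
  finally show ?thesis using eq by (simp add: n_def)
qed

lemma int_abs_le_sq:
  fixes a b :: nat
  shows "\<bar>real a - real b\<bar> \<le> (real a - real b)^2"
proof -
  have "\<bar>int a - int b\<bar> \<le> (int a - int b)^2"
  proof (cases "int a - int b = 0")
    case True then show ?thesis by simp
  next
    case False
    then have "1 \<le> \<bar>int a - int b\<bar>" by linarith
    then have "\<bar>int a - int b\<bar> * 1 \<le> \<bar>int a - int b\<bar> * \<bar>int a - int b\<bar>"
      by (intro mult_left_mono) auto
    then show ?thesis by (simp add: power2_eq_square)
  qed
  then have "real_of_int \<bar>int a - int b\<bar> \<le> real_of_int ((int a - int b)^2)" by linarith
  then show ?thesis by simp
qed

lemma D_le:
  fixes g :: "nat \<Rightarrow> nat"
  shows "\<bar>real (g 0) - real (g L)\<bar> \<le> (\<Sum>i<L. (real (g i) - real (g (Suc i)))^2)"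
proof -
  have "\<bar>real (g 0) - real (g L)\<bar> = \<bar>\<Sum>i<L. (real (g i) - real (g (Suc i)))\<bar>"
    using sum_lessThan_telescope'[of "\<lambda>i. real (g i)" L] by simp
  also have "\<dots> \<le> (\<Sum>i<L. \<bar>real (g i) - real (g (Suc i))\<bar>)" by (rule sum_abs)
  also have "\<dots> \<le> (\<Sum>i<L. (real (g i) - real (g (Suc i)))^2)" by (intro sum_mono int_abs_le_sq)
  finally show ?thesis .
qed




lemma path_sum_le_sigma:
  assumes sg: "simple_graph V E" and pe: "\<forall>i<L. {y i, y (Suc i)} \<in> E" and inj: "inj_on y {0..L}"
  shows "(\<Sum>i<L. (real (degree E (y i)) - real (degree E (y (Suc i))))^2) \<le> sigma V E"
proof -
  define f where "f p = (if {fst p, snd p} \<in> E then (real (degree E (fst p)) - real (degree E (snd p)))^2 else 0)" for p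
  have finV: "finite V" using sg by (simp add: simple_graph_def)
  have edgeV: "\<And>u v. {u,v} \<in> E \<Longrightarrow> u \<in> V \<and> v \<in> V" using sg by (auto simp: simple_graph_def)
  have sig: "sigma V E = (\<Sum>p\<in>V\<times>V. f p) / 2"
    unfolding sigma_def f_def by (simp add: sum.cartesian_product case_prod_beta)
  define P1 where "P1 = (\<lambda>i. (y i, y (Suc i))) ` {..<L}"
  define P2 where "P2 = (\<lambda>i. (y (Suc i), y i)) ` {..<L}"
  have inj1: "inj_on (\<lambda>i. (y i, y (Suc i))) {..<L}"
    by (rule inj_onI) (use inj in \<open>auto simp: inj_on_def\<close>)
  have inj2: "inj_on (\<lambda>i. (y (Suc i), y i)) {..<L}"
    by (rule inj_onI) (use inj in \<open>auto simp: inj_on_def\<close>)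
  have disj: "P1 \<inter> P2 = {}"
  proof (rule ccontr)
    assume "P1 \<inter> P2 \<noteq> {}"
    then obtain i j where ij: "i < L" "j < L" "y i = y (Suc j)" "y (Suc i) = y j"
      unfolding P1_def P2_def by auto
    then have "i = Suc j" "Suc i = j" using inj unfolding inj_on_def by (metis atLeastAtMost_iff le0 less_imp_le_nat Suc_leI)+
    then show False by simp
  qed
  have sub: "P1 \<union> P2 \<subseteq> V \<times> V"
    unfolding P1_def P2_def using pe edgeV by (auto simp: insert_commute)
  have fin12: "finite P1" "finite P2" unfolding P1_def P2_def by auto
  have "(\<Sum>p\<in>P1 \<union> P2. f p) \<le> (\<Sum>p\<in>V\<times>V. f p)"
    by (rule sum_mono2) (use finV sub in \<open>auto simp: f_def\<close>)
  moreover have "(\<Sum>p\<in>P1 \<union> P2. f p) = (\<Sum>p\<in>P1. f p) + (\<Sum>p\<in>P2. f p)"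
    using fin12 disj by (rule sum.union_disjoint)
  moreover have "(\<Sum>p\<in>P1. f p) = (\<Sum>i<L. (real (degree E (y i)) - real (degree E (y (Suc i))))^2)"
    unfolding P1_def using inj1 pe by (simp add: sum.reindex f_def)
  moreover have "(\<Sum>p\<in>P2. f p) = (\<Sum>i<L. (real (degree E (y i)) - real (degree E (y (Suc i))))^2)"
    unfolding P2_def using inj2 pe by (simp add: sum.reindex f_def insert_commute power2_commute)
  ultimately show ?thesis using sig by linarith
qed

lemma card_filter_sum: "finite A \<Longrightarrow> card {x\<in>A. P x} = (\<Sum>x\<in>A. if P x then 1 else 0 :: nat)"
  by (simp add: sum.If_cases Int_def)

lemma sum_deg_path:
  fixes y :: "nat \<Rightarrow> 'a"
  assumes sg: "simple_graph V E" and c3: "\<forall>v. card {j. j \<le> L \<and> {y j, v} \<in> E} \<le> 3"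
  shows "(\<Sum>j\<le>L. degree E (y j)) \<le> 3 * card V"
proof -
  have finV: "finite V" using sg by (simp add: simple_graph_def)
  have "(\<Sum>j\<le>L. degree E (y j)) = (\<Sum>j\<le>L. \<Sum>v\<in>V. if {y j, v} \<in> E then 1 else 0)"
    using deg_nbrs[OF sg] finV by (simp add: card_filter_sum)
  also have "\<dots> = (\<Sum>v\<in>V. \<Sum>j\<le>L. if {y j, v} \<in> E then 1 else 0)" by (rule sum.swap)
  also have "\<dots> = (\<Sum>v\<in>V. card {j. j \<le> L \<and> {y j, v} \<in> E})"
  proof (rule sum.cong[OF refl])
    fix v
    have "card {j\<in>{..L}. {y j, v} \<in> E} = (\<Sum>j\<le>L. if {y j, v} \<in> E then 1 else 0)"
      by (rule card_filter_sum) simp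
    moreover have "{j\<in>{..L}. {y j, v} \<in> E} = {j. j \<le> L \<and> {y j, v} \<in> E}" by auto
    ultimately show "(\<Sum>j\<le>L. if {y j, v} \<in> E then 1 else 0) = card {j. j \<le> L \<and> {y j, v} \<in> E}" by simp
  qed
  also have "\<dots> \<le> (\<Sum>v\<in>V. 3)" by (rule sum_mono) (use c3 in auto)
  finally show ?thesis by simp
qed

lemma analysis:
  fixes t :: "nat \<Rightarrow> real"
  assumes t0: "t 0 = 0" and tL: "t L = D" and D0: "0 < D" and tle: "\<forall>j\<le>L. t j \<le> D"
    and S: "(\<Sum>i<L. (t (Suc i) - t i)^2) \<le> S"
  shows "D^3 \<le> 8 * S * (\<Sum>j\<le>L. D - t j)"
proof -
  have ex: "\<exists>j. D/2 < t j" using tL D0 by (intro exI[of _ L]) simp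
  define m where "m = (LEAST j. D/2 < t j)"
  have tm: "D/2 < t m" unfolding m_def by (rule LeastI_ex[OF ex])
  have mL: "m \<le> L" unfolding m_def by (rule Least_le) (use tL D0 in simp)
  have below: "\<And>j. j < m \<Longrightarrow> t j \<le> D/2" unfolding m_def using not_less_Least by fastforce
  have S0: "0 \<le> S" using S by (smt (verit) sum_nonneg zero_le_power2)
  have tel: "t m = (\<Sum>i<m. t (Suc i) - t i)" using sum_lessThan_telescope[of t m] t0 by simp
  have "(t m)^2 \<le> real m * (\<Sum>i<m. (t (Suc i) - t i)^2)" unfolding tel by (rule cs_sum)
  also have "(\<Sum>i<m. (t (Suc i) - t i)^2) \<le> (\<Sum>i<L. (t (Suc i) - t i)^2)"
    by (rule sum_mono2) (use mL in auto)
  then have "real m * (\<Sum>i<m. (t (Suc i) - t i)^2) \<le> real m * S"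
    using S by (intro mult_left_mono) auto
  finally have tmS: "(t m)^2 \<le> real m * S" .
  have "(D/2)^2 < (t m)^2" using tm D0 by (intro power_strict_mono) auto
  then have D2: "D^2 < 4 * (real m * S)" using tmS by (simp add: power_divide)
  have "real m * (D/2) = (\<Sum>j<m. D/2)" by simp
  also have "\<dots> \<le> (\<Sum>j<m. D - t j)" by (rule sum_mono) (use below in force)
  also have "\<dots> \<le> (\<Sum>j\<le>L. D - t j)"
    by (rule sum_mono2) (use mL tle in auto)
  finally have sm: "real m * (D/2) \<le> (\<Sum>j\<le>L. D - t j)" .
  have "D^3 = D * D^2" by (simp add: power3_eq_cube power2_eq_square)
  also have "\<dots> \<le> D * (4 * (real m * S))" using D2 D0 by (intro mult_left_mono) auto
  also have "\<dots> = 8 * S * (real m * (D/2))" by (simp add: algebra_simps)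
  also have "\<dots> \<le> 8 * S * (\<Sum>j\<le>L. D - t j)" using sm S0 by (intro mult_left_mono) auto
  finally show ?thesis .
qed




lemma sigma_nonneg: "0 \<le> sigma V E"
  unfolding sigma_def by (intro divide_nonneg_nonneg sum_nonneg) auto

lemma upper:
  assumes cg: "connected_graph V E"
  shows "sigma_t V E \<le> sqrt 1.5 * real (card V) powr (5/2) * sigma V E"
proof -
  have sg: "simple_graph V E" and Vne: "V \<noteq> {}" and conn: "\<forall>u\<in>V. \<forall>v\<in>V. (u,v) \<in> (adj_rel E)\<^sup>*"
    using cg by (auto simp: connected_graph_def)
  have finV: "finite V" using sg by (simp add: simple_graph_def)
  have edgeV: "\<And>u v. {u,v} \<in> E \<Longrightarrow> u \<in> V \<and> v \<in> V" using sg by (auto simp: simple_graph_def)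
  define Dmax where "Dmax = Max (degree E ` V)"
  define Dmin where "Dmin = Min (degree E ` V)"
  obtain b where bV: "b \<in> V" and db: "degree E b = Dmax"
  proof -
    have "Dmax \<in> degree E ` V" unfolding Dmax_def using finV Vne by (intro Max_in) auto
    then show ?thesis using that by blast
  qed
  obtain a where aV: "a \<in> V" and da: "degree E a = Dmin"
  proof -
    have "Dmin \<in> degree E ` V" unfolding Dmin_def using finV Vne by (intro Min_in) auto
    then show ?thesis using that by blast
  qed
  have bnd: "\<And>u. u \<in> V \<Longrightarrow> Dmin \<le> degree E u \<and> degree E u \<le> Dmax"
    unfolding Dmin_def Dmax_def using finV by auto
  define D where "D = real Dmax - real Dmin"
  have D0: "0 \<le> D" using bnd[OF aV] by (simp add: D_def)
  define n where "n = real (card V)"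
  have n0: "0 < n" using finV Vne by (simp add: n_def card_gt_0_iff)
  have st: "sigma_t V E \<le> n^2 * D^2 / 4"
    unfolding sigma_t_def n_def D_def
    by (rule popov[OF finV]) (use bnd in auto)
  have S0: "0 \<le> sigma V E" by (rule sigma_nonneg)
  obtain L y where y0: "y 0 = b" and yL: "y L = a" and ye: "\<forall>i<L. {y i, y (Suc i)} \<in> E"
    and inj: "inj_on y {0..L}" and c3: "\<forall>v. card {j. j \<le> L \<and> {y j, v} \<in> E} \<le> 3"
    using min_path[of b a E] conn aV bV by blast
  have yV: "\<And>j. j \<le> L \<Longrightarrow> y j \<in> V"
  proof -
    fix j assume "j \<le> L"
    show "y j \<in> V"
    proof (cases j)
      case 0 then show ?thesis using y0 bV by simp
    next
      case (Suc i)
      then have "{y i, y j} \<in> E" using ye \<open>j \<le> L\<close> by auto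
      then show ?thesis using edgeV by blast
    qed
  qed
  have pathS: "(\<Sum>i<L. (real (degree E (y i)) - real (degree E (y (Suc i))))^2) \<le> sigma V E"
    by (rule path_sum_le_sigma[OF sg ye inj])
  have DS: "D \<le> sigma V E"
    using D_le[of "\<lambda>i. degree E (y i)" L] pathS y0 yL db da D0 by (simp add: D_def)
  have D3: "D^3 \<le> 24 * n * sigma V E"
  proof (cases "D = 0")
    case True then show ?thesis using S0 n0 by simp
  next
    case False
    then have Dp: "0 < D" using D0 by simp
    define t where "t j = real Dmax - real (degree E (y j))" for j
    have an: "D^3 \<le> 8 * sigma V E * (\<Sum>j\<le>L. D - t j)"
    proof (rule analysis)
      show "t 0 = 0" using y0 db by (simp add: t_def)
      show "t L = D" using yL da by (simp add: t_def D_def)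
      show "0 < D" by (rule Dp)
      show "\<forall>j\<le>L. t j \<le> D" using yV bnd by (auto simp: t_def D_def)
      have "(\<Sum>i<L. (t (Suc i) - t i)^2) = (\<Sum>i<L. (real (degree E (y i)) - real (degree E (y (Suc i))))^2)"
        by (intro sum.cong refl) (simp add: t_def power2_commute)
      then show "(\<Sum>i<L. (t (Suc i) - t i)^2) \<le> sigma V E" using pathS by simp
    qed
    have "(\<Sum>j\<le>L. D - t j) \<le> (\<Sum>j\<le>L. real (degree E (y j)))"
      by (rule sum_mono) (simp add: t_def D_def)
    also have "\<dots> = real (\<Sum>j\<le>L. degree E (y j))" by simp
    also have "\<dots> \<le> real (3 * card V)" using sum_deg_path[OF sg c3] by linarith
    finally have "(\<Sum>j\<le>L. D - t j) \<le> 3 * n" by (simp add: n_def)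
    then have "8 * sigma V E * (\<Sum>j\<le>L. D - t j) \<le> 8 * sigma V E * (3 * n)"
      using S0 by (intro mult_left_mono) auto
    then show ?thesis using an by simp
  qed
  define R where "R = sqrt 1.5 * n powr (5/2) * sigma V E"
  have R0: "0 \<le> R" unfolding R_def using S0 by simp
  have Rsq: "R^2 = 1.5 * n^5 * (sigma V E)^2"
  proof -
    have "(n powr (5/2))^2 = n powr 5"
      by (simp add: powr_powr[symmetric] powr_realpow[symmetric] n0 power2_eq_square powr_add[symmetric])
    also have "\<dots> = n^5" using n0 by (simp add: powr_realpow)
    finally show ?thesis unfolding R_def by (simp add: power_mult_distrib)
  qed
  have "(n^2 * D^2 / 4)^2 = n^4 * (D * D^3) / 16" by (simp add: power2_eq_square power3_eq_cube field_simps power4_eq_xxxx)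
  also have "\<dots> \<le> n^4 * (sigma V E * (24 * n * sigma V E)) / 16"
    using DS D3 D0 S0 n0 by (intro divide_right_mono mult_left_mono mult_mono) auto
  also have "\<dots> = R^2"
  proof -
    have n5: "n^5 = n^4 * n" using power_add[of n 4 1] by simp
    show ?thesis unfolding Rsq n5 by (simp add: power2_eq_square)
  qed
  finally have sq: "(n^2 * D^2 / 4)^2 \<le> R^2" .
  have "n^2 * D^2 / 4 \<le> R" by (rule power2_le_imp_le[OF sq R0])
  then show ?thesis using st unfolding R_def n_def by linarith
qed




lemma iso:
  assumes bij: "bij_betw h V W" and cg: "connected_graph V E" and nr: "\<not> regular_graph V E"
  shows "connected_graph W ((`) h ` E) \<and> \<not> regular_graph W ((`) h ` E)
     \<and> sigma W ((`) h ` E) = sigma V E \<and> sigma_t W ((`) h ` E) = sigma_t V E"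
proof -
  define E' where "E' = (`) h ` E"
  have sg: "simple_graph V E" and Vne: "V \<noteq> {}" and conn: "\<forall>u\<in>V. \<forall>v\<in>V. (u,v) \<in> (adj_rel E)\<^sup>*"
    using cg by (auto simp: connected_graph_def)
  have finV: "finite V" using sg by (simp add: simple_graph_def)
  have esub: "\<And>e. e \<in> E \<Longrightarrow> e \<subseteq> V \<and> card e = 2" using sg by (auto simp: simple_graph_def)
  have inj: "inj_on h V" and W: "h ` V = W" using bij by (auto simp: bij_betw_def)
  have key: "\<And>u v. u \<in> V \<Longrightarrow> v \<in> V \<Longrightarrow> {h u, h v} \<in> E' \<longleftrightarrow> {u,v} \<in> E"
  proof
    fix u v assume uv: "u \<in> V" "v \<in> V" "{h u, h v} \<in> E'"
    then obtain e where e: "e \<in> E" "{h u, h v} = h ` e" unfolding E'_def by auto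
    then have "h ` {u,v} = h ` e" by simp
    moreover have sub1: "{u,v} \<subseteq> V" using uv by auto
    moreover have "e \<subseteq> V" using esub[OF e(1)] by simp
    ultimately have "{u,v} = e" using inj_on_image_eq_iff[OF inj] by metis
    then show "{u,v} \<in> E" using e by simp
  next
    fix u v assume "{u,v} \<in> E"
    then have "h ` {u,v} \<in> E'" unfolding E'_def by blast
    then show "{h u, h v} \<in> E'" by simp
  qed
  have finW: "finite W" using W finV by blast
  have sgW: "simple_graph W E'"
    unfolding simple_graph_def
  proof (rule conjI[OF finW], intro ballI)
    fix e' assume "e' \<in> E'"
    then obtain e where e: "e \<in> E" "e' = h ` e" unfolding E'_def by auto
    have "card (h ` e) = card e" using inj esub[OF e(1)] by (intro card_image) (auto intro: inj_on_subset)
    then show "e' \<subseteq> W \<and> card e' = 2" using e esub[OF e(1)] W by auto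
  qed
  have deg: "\<And>u. u \<in> V \<Longrightarrow> degree E' (h u) = degree E u"
  proof -
    fix u assume uV: "u \<in> V"
    have "{w\<in>W. {h u, w} \<in> E'} = h ` {v\<in>V. {u,v} \<in> E}"
      using key[OF uV] W by auto
    moreover have "card (h ` {v\<in>V. {u,v} \<in> E}) = card {v\<in>V. {u,v} \<in> E}"
      by (rule card_image) (rule inj_on_subset[OF inj], auto)
    ultimately show "degree E' (h u) = degree E u" using deg_nbrs[OF sgW] deg_nbrs[OF sg] by simp
  qed
  have adjmap: "\<And>x y. (x,y) \<in> (adj_rel E)\<^sup>* \<Longrightarrow> (h x, h y) \<in> (adj_rel E')\<^sup>*"
  proof -
    fix x y assume "(x,y) \<in> (adj_rel E)\<^sup>*"
    then show "(h x, h y) \<in> (adj_rel E')\<^sup>*"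
    proof (induction rule: rtrancl_induct)
      case base then show ?case by simp
    next
      case (step y z)
      then have "{y,z} \<in> E" by (simp add: adj_rel_def)
      then have "h ` {y,z} \<in> E'" unfolding E'_def by blast
      then have "(h y, h z) \<in> adj_rel E'" by (simp add: adj_rel_def)
      then show ?case using step.IH by (rule rtrancl_into_rtrancl[rotated])
    qed
  qed
  have cW: "connected_graph W E'"
    unfolding connected_graph_def
  proof (intro conjI sgW ballI)
    show "W \<noteq> {}" using W Vne by auto
    fix w w' assume "w \<in> W" "w' \<in> W"
    then obtain v v' where "v \<in> V" "v' \<in> V" "w = h v" "w' = h v'" using W by auto
    then show "(w, w') \<in> (adj_rel E')\<^sup>*" using conn adjmap by blast
  qed
  have nrW: "\<not> regular_graph W E'"
  proof
    assume r: "regular_graph W E'"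
    have "regular_graph V E" unfolding regular_graph_def
    proof (intro ballI)
      fix u v assume "u \<in> V" "v \<in> V"
      then have "degree E' (h u) = degree E' (h v)" using r W unfolding regular_graph_def by blast
      then show "degree E u = degree E v" using deg \<open>u \<in> V\<close> \<open>v \<in> V\<close> by simp
    qed
    then show False using nr by simp
  qed
  have sums: "(\<Sum>w\<in>W. \<Sum>w'\<in>W. g w w') = (\<Sum>u\<in>V. \<Sum>v\<in>V. g (h u) (h v))" for g :: "'b \<Rightarrow> 'b \<Rightarrow> real"
  proof -
    have r: "\<And>f. sum f W = (\<Sum>x\<in>V. f (h x))" using sum.reindex_bij_betw[OF bij, symmetric] by blast
    have "(\<Sum>w\<in>W. \<Sum>w'\<in>W. g w w') = (\<Sum>u\<in>V. \<Sum>w'\<in>W. g (h u) w')" by (rule r)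
    also have "\<dots> = (\<Sum>u\<in>V. \<Sum>v\<in>V. g (h u) (h v))" by (intro sum.cong refl r)
    finally show ?thesis .
  qed
  have s1: "sigma W E' = sigma V E"
    unfolding sigma_def sums
    by (intro arg_cong[where f="\<lambda>x. x / 2"] sum.cong refl) (simp add: key deg)
  have s2: "sigma_t W E' = sigma_t V E"
    unfolding sigma_t_def sums
    by (intro arg_cong[where f="\<lambda>x. x / 2"] sum.cong refl) (simp add: deg)
  show ?thesis using cW nrW s1 s2 unfolding E'_def by simp
qed




definition cadj :: "nat \<Rightarrow> (nat \<Rightarrow> nat) \<Rightarrow> nat \<times> nat \<Rightarrow> nat \<times> nat \<Rightarrow> bool" where
  "cadj m s u v \<longleftrightarrow>
     (fst u = fst v \<and> fst u < m \<and> snd u < s (fst u) \<and> snd v < s (fst u) \<and> snd u \<noteq> snd v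
       \<and> \<not> (snd u = 0 \<and> snd v = s (fst u) - 1) \<and> \<not> (snd v = 0 \<and> snd u = s (fst u) - 1))
   \<or> (fst v = Suc (fst u) \<and> fst v < m \<and> snd u = s (fst u) - 1 \<and> snd v = 0)
   \<or> (fst u = Suc (fst v) \<and> fst u < m \<and> snd v = s (fst v) - 1 \<and> snd u = 0)"

definition CV :: "nat \<Rightarrow> (nat \<Rightarrow> nat) \<Rightarrow> (nat \<times> nat) set" where
  "CV m s = Sigma {..<m} (\<lambda>i. {..<s i})"

definition CE :: "nat \<Rightarrow> (nat \<Rightarrow> nat) \<Rightarrow> (nat \<times> nat) set set" where
  "CE m s = {{u,v} | u v. cadj m s u v}"

definition chain_ok :: "nat \<Rightarrow> (nat \<Rightarrow> nat) \<Rightarrow> bool" where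
  "chain_ok m s \<longleftrightarrow> 2 \<le> m \<and> (\<forall>i<m. 3 \<le> s i) \<and> (\<forall>i. Suc i < m \<longrightarrow> s i \<le> s (Suc i) \<and> s (Suc i) \<le> Suc (s i))"

lemma cadj_sym: "cadj m s u v = cadj m s v u"
  unfolding cadj_def by auto

lemma cadj_CV:
  assumes ok: "chain_ok m s" and a: "cadj m s u v"
  shows "u \<in> CV m s \<and> v \<in> CV m s \<and> u \<noteq> v"
proof -
  have s3: "\<And>i. i < m \<Longrightarrow> 3 \<le> s i" using ok by (auto simp: chain_ok_def)
  obtain i p j q where u: "u = (i,p)" and v: "v = (j,q)" by (cases u, cases v) auto
  show ?thesis using a s3[of i] s3[of j] unfolding u v cadj_def CV_def by auto
qed

lemma CE_iff:
  assumes ok: "chain_ok m s"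
  shows "{u,v} \<in> CE m s \<longleftrightarrow> cadj m s u v"
proof
  assume "{u,v} \<in> CE m s"
  then obtain u' v' where e: "{u,v} = {u',v'}" "cadj m s u' v'" unfolding CE_def by auto
  then show "cadj m s u v" using cadj_sym by (metis doubleton_eq_iff)
next
  assume "cadj m s u v"
  then show "{u,v} \<in> CE m s" unfolding CE_def by blast
qed

lemma chain_simple:
  assumes ok: "chain_ok m s"
  shows "simple_graph (CV m s) (CE m s)"
  unfolding simple_graph_def
proof (intro conjI ballI)
  show "finite (CV m s)" unfolding CV_def by auto
  fix e assume "e \<in> CE m s"
  then obtain u v where e: "e = {u,v}" "cadj m s u v" unfolding CE_def by auto
  then show "e \<subseteq> CV m s" "card e = 2" using cadj_CV[OF ok e(2)] by auto
qed

lemma chain_nbrs: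
  assumes ok: "chain_ok m s"
  shows "{v \<in> CV m s. {u,v} \<in> CE m s} = {v. cadj m s u v}"
  using cadj_CV[OF ok, of u] CE_iff[OF ok, of u] by blast

lemma chain_deg:
  assumes ok: "chain_ok m s" and iV: "i < m" and pV: "p < s i"
  shows "degree (CE m s) (i,p) = s i - 1 - (if (i = 0 \<and> p = 0) \<or> (Suc i = m \<and> p = s i - 1) then 1 else 0)"
proof -
  have s3: "\<And>i. i < m \<Longrightarrow> 3 \<le> s i" and m2: "2 \<le> m" using ok by (auto simp: chain_ok_def)
  have si: "3 \<le> s i" using s3 iV .
  have dg: "degree (CE m s) (i,p) = card {v. cadj m s (i,p) v}"
    using deg_nbrs[OF chain_simple[OF ok]] chain_nbrs[OF ok] by simp
  consider "p = 0" | "p = s i - 1" | "0 < p \<and> p < s i - 1" using pV si by linarith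
  then show ?thesis
  proof cases
    case 1
    have "{v. cadj m s (i,p) v} = Pair i ` {1..<s i - 1} \<union> (if 0 < i then {(i - 1, s (i - 1) - 1)} else {})"
      using 1 si iV by (auto simp: cadj_def image_iff split: if_splits)
    moreover have "card (Pair i ` {1..<s i - 1} \<union> (if 0 < i then {(i - 1, s (i - 1) - 1)} else {}))
        = s i - 2 + (if 0 < i then 1 else 0)"
    proof -
      have c1: "card (Pair i ` {1..<s i - 1}) = s i - 2" by (simp add: card_image inj_on_def)
      have "card (Pair i ` {1..<s i - 1} \<union> (if 0 < i then {(i - 1, s (i - 1) - 1)} else {}))
         = card (Pair i ` {1..<s i - 1}) + card (if 0 < i then {(i - 1, s (i - 1) - 1)} else {} :: (nat \<times> nat) set)"
        by (rule card_Un_disjoint) auto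
      then show ?thesis using c1 by simp
    qed
    ultimately show ?thesis using dg 1 si m2 by auto
  next
    case 2
    have "{v. cadj m s (i,p) v} = Pair i ` {1..<s i - 1} \<union> (if Suc i < m then {(Suc i, 0)} else {})"
      using 2 si iV by (auto simp: cadj_def image_iff split: if_splits)
    moreover have "card (Pair i ` {1..<s i - 1} \<union> (if Suc i < m then {(Suc i, 0)} else {}))
        = s i - 2 + (if Suc i < m then 1 else 0)"
    proof -
      have c1: "card (Pair i ` {1..<s i - 1}) = s i - 2" by (simp add: card_image inj_on_def)
      have "card (Pair i ` {1..<s i - 1} \<union> (if Suc i < m then {(Suc i, 0)} else {}))
         = card (Pair i ` {1..<s i - 1}) + card (if Suc i < m then {(Suc i, 0)} else {} :: (nat \<times> nat) set)"
        by (rule card_Un_disjoint) auto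
      then show ?thesis using c1 by simp
    qed
    ultimately show ?thesis using dg 2 si m2 iV by auto
  next
    case 3
    have "{v. cadj m s (i,p) v} = Pair i ` ({..<s i} - {p})"
      using 3 si iV by (auto simp: cadj_def image_iff)
    moreover have "card (Pair i ` ({..<s i} - {p})) = s i - 1"
      using pV by (simp add: card_image inj_on_def)
    ultimately show ?thesis using dg 3 by auto
  qed
qed




lemma chain_deg_card:
  assumes ok: "chain_ok m s"
  shows "degree (CE m s) u = card {v. cadj m s u v}"
  using deg_nbrs[OF chain_simple[OF ok]] chain_nbrs[OF ok] by simp

lemma chain_conn:
  assumes ok: "chain_ok m s"
  shows "connected_graph (CV m s) (CE m s)"
proof -
  have s3: "\<And>i. i < m \<Longrightarrow> 3 \<le> s i" and m2: "2 \<le> m" using ok by (auto simp: chain_ok_def)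
  let ?R = "adj_rel (CE m s)"
  have R: "\<And>u v. (u,v) \<in> ?R \<longleftrightarrow> cadj m s u v" using CE_iff[OF ok] by (simp add: adj_rel_def)
  have within: "((0,0),(i,q)) \<in> ?R\<^sup>*" if "i < m" "q0 < s i" "q < s i" "((0,0),(i,q0)) \<in> ?R\<^sup>*" for i q0 q
  proof -
    have si: "3 \<le> s i" using s3 that(1) .
    have a1: "((0,0),(i,1)) \<in> ?R\<^sup>*"
    proof (cases "q0 = 1")
      case True then show ?thesis using that by simp
    next
      case False
      then have "cadj m s (i,q0) (i,1)" using that si by (auto simp: cadj_def)
      then show ?thesis using that(4) R by (meson rtrancl_into_rtrancl)
    qed
    show ?thesis
    proof (cases "q = 1")
      case True then show ?thesis using a1 by simp
    next
      case False
      then have "cadj m s (i,1) (i,q)" using that si by (auto simp: cadj_def)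
      then show ?thesis using a1 R by (meson rtrancl_into_rtrancl)
    qed
  qed
  have reach: "\<forall>p<s i. ((0,0),(i,p)) \<in> ?R\<^sup>*" if "i < m" for i
    using that
  proof (induction i)
    case 0
    then show ?case using within[of 0 0] s3[of 0] by auto
  next
    case (Suc i)
    then have im: "i < m" by simp
    have "((0,0),(i, s i - 1)) \<in> ?R\<^sup>*" using Suc s3[OF im] by auto
    moreover have "cadj m s (i, s i - 1) (Suc i, 0)" using Suc.prems by (simp add: cadj_def)
    ultimately have "((0,0),(Suc i, 0)) \<in> ?R\<^sup>*" using R by (meson rtrancl_into_rtrancl)
    then show ?case using within[of "Suc i" 0] Suc.prems s3[of "Suc i"] by auto
  qed
  have symR: "(y,x) \<in> ?R\<^sup>*" if "(x,y) \<in> ?R\<^sup>*" for x y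
    using that
  proof (induction rule: rtrancl_induct)
    case base then show ?case by simp
  next
    case (step y z)
    then have "(z,y) \<in> ?R" using R cadj_sym by blast
    then show ?case using step.IH by (rule converse_rtrancl_into_rtrancl)
  qed
  show ?thesis unfolding connected_graph_def
  proof (intro conjI ballI chain_simple[OF ok])
    have "(0,0) \<in> CV m s" using m2 s3[of 0] by (auto simp: CV_def)
    then show "CV m s \<noteq> {}" by blast
    fix u v assume "u \<in> CV m s" "v \<in> CV m s"
    then have "((0,0),u) \<in> ?R\<^sup>*" "((0,0),v) \<in> ?R\<^sup>*" using reach by (auto simp: CV_def)
    then show "(u,v) \<in> ?R\<^sup>*" using symR by (meson rtrancl_trans)
  qed
qed

lemma count_changes:
  assumes ok: "chain_ok m s" and k: "k < m"
  shows "card {i. i < k \<and> s i \<noteq> s (Suc i)} + s 0 \<le> s k"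
  using k
proof (induction k)
  case 0 then show ?case by simp
next
  case (Suc k)
  have st: "s k \<le> s (Suc k)" using ok Suc.prems by (auto simp: chain_ok_def)
  have eq: "{i. i < Suc k \<and> s i \<noteq> s (Suc i)} = {i. i < k \<and> s i \<noteq> s (Suc i)} \<union> (if s k \<noteq> s (Suc k) then {k} else {})"
    by (auto simp: less_Suc_eq)
  have "card {i. i < Suc k \<and> s i \<noteq> s (Suc i)} \<le> card {i. i < k \<and> s i \<noteq> s (Suc i)} + card (if s k \<noteq> s (Suc k) then {k} else {})"
    unfolding eq by (rule card_Un_le)
  then show ?case using Suc st by (auto split: if_splits)
qed




lemma sq_le1:
  fixes a b :: nat
  assumes "a \<le> Suc b" "b \<le> Suc a"
  shows "(real a - real b)^2 \<le> 1"
proof -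
  consider "a = b" | "a = Suc b" | "b = Suc a" using assms by linarith
  then show ?thesis by cases auto
qed

lemma chain_deg_bounds:
  assumes ok: "chain_ok m s" and iV: "i < m" and pV: "p < s i"
  shows "s i - 2 \<le> degree (CE m s) (i,p) \<and> degree (CE m s) (i,p) \<le> s i - 1
     \<and> ((i,p) \<noteq> (0,0) \<and> (i,p) \<noteq> (m - 1, s (m - 1) - 1) \<longrightarrow> degree (CE m s) (i,p) = s i - 1)"
proof -
  have "3 \<le> s i" using ok iV by (auto simp: chain_ok_def)
  then show ?thesis using chain_deg[OF ok iV pV] iV by auto
qed

lemma card_Un6: "card (A1 \<union> A2 \<union> A3 \<union> A4 \<union> A5 \<union> A6) \<le>
   card A1 + card A2 + card A3 + card A4 + card A5 + card A6"
  using card_Un_le[of "A1 \<union> A2 \<union> A3 \<union> A4 \<union> A5" A6] card_Un_le[of "A1 \<union> A2 \<union> A3 \<union> A4" A5]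
    card_Un_le[of "A1 \<union> A2 \<union> A3" A4] card_Un_le[of "A1 \<union> A2" A3] card_Un_le[of A1 A2]
  by linarith

lemma chain_sigma:
  assumes ok: "chain_ok m s"
  shows "sigma (CV m s) (CE m s) \<le> 2 * real (s (m - 1))"
proof -
  have s3: "\<And>i. i < m \<Longrightarrow> 3 \<le> s i" and m2: "2 \<le> m"
    and st: "\<And>i. Suc i < m \<Longrightarrow> s i \<le> s (Suc i) \<and> s (Suc i) \<le> Suc (s i)"
    using ok by (auto simp: chain_ok_def)
  define d where "d u = degree (CE m s) u" for u
  define z where "z = (m - 1, s (m - 1) - 1)"
  define I where "I = {i. i < m - 1 \<and> s i \<noteq> s (Suc i)}"
  define bad where "bad u v \<longleftrightarrow> u = (0,0) \<or> v = (0,0) \<or> u = z \<or> v = z \<or>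
      (\<exists>i\<in>I. (u,v) = ((i, s i - 1), (Suc i, 0)) \<or> (u,v) = ((Suc i, 0), (i, s i - 1)))" for u v
  have db: "\<And>i p. i < m \<Longrightarrow> p < s i \<Longrightarrow> s i - 2 \<le> d (i,p) \<and> d (i,p) \<le> s i - 1
     \<and> ((i,p) \<noteq> (0,0) \<and> (i,p) \<noteq> z \<longrightarrow> d (i,p) = s i - 1)"
    unfolding d_def z_def by (rule chain_deg_bounds[OF ok])
  have pt: "(real (d u) - real (d v))^2 \<le> (if bad u v then 1 else 0)" if a: "cadj m s u v" for u v
  proof -
    obtain i p j q where u: "u = (i,p)" and v: "v = (j,q)" by (cases u, cases v) auto
    have uv: "u \<in> CV m s" "v \<in> CV m s" using cadj_CV[OF ok a] by auto
    then have ip: "i < m" "p < s i" and jq: "j < m" "q < s j" using u v by (auto simp: CV_def)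
    consider (same) "i = j" | (fw) "j = Suc i" "p = s i - 1" "q = 0" | (bw) "i = Suc j" "q = s j - 1" "p = 0"
      using a unfolding u v cadj_def by auto
    then show ?thesis
    proof cases
      case same
      have b1: "(real (d u) - real (d v))^2 \<le> 1"
        using db[OF ip] db[OF jq] same s3[OF ip(1)] unfolding u v by (intro sq_le1) auto
      show ?thesis
      proof (cases "bad u v")
        case True then show ?thesis using b1 by simp
      next
        case False
        then have "u \<noteq> (0,0)" "u \<noteq> z" "v \<noteq> (0,0)" "v \<noteq> z" unfolding bad_def by auto
        then have "d u = d v" using db[OF ip] db[OF jq] same unfolding u v by auto
        then show ?thesis by simp
      qed
    next
      case fw
      have sip: "3 \<le> s i" "3 \<le> s j" using s3 ip jq by auto
      have nz: "(i,p) \<noteq> (0,0)" "(i,p) \<noteq> z" "(j,q) \<noteq> (0,0)" "(j,q) \<noteq> z"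
        using fw sip jq unfolding z_def by auto
      have du: "d u = s i - 1" "d v = s j - 1" using db[OF ip] db[OF jq] nz unfolding u v by auto
      have sst: "s i \<le> s j" "s j \<le> Suc (s i)" using st[of i] fw jq by auto
      show ?thesis
      proof (cases "s i = s j")
        case True then show ?thesis using du by simp
      next
        case False
        then have "i \<in> I" using fw jq unfolding I_def by auto
        then have "bad u v" unfolding bad_def u v using fw by auto
        moreover have "(real (d u) - real (d v))^2 \<le> 1" using du sst sip by (intro sq_le1) auto
        ultimately show ?thesis by simp
      qed
    next
      case bw
      have sip: "3 \<le> s i" "3 \<le> s j" using s3 ip jq by auto
      have nz: "(i,p) \<noteq> (0,0)" "(i,p) \<noteq> z" "(j,q) \<noteq> (0,0)" "(j,q) \<noteq> z"
        using bw sip ip unfolding z_def by auto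
      have du: "d u = s i - 1" "d v = s j - 1" using db[OF ip] db[OF jq] nz unfolding u v by auto
      have sst: "s j \<le> s i" "s i \<le> Suc (s j)" using st[of j] bw ip by auto
      show ?thesis
      proof (cases "s i = s j")
        case True then show ?thesis using du by simp
      next
        case False
        then have "j \<in> I" using bw ip unfolding I_def by auto
        then have "bad u v" unfolding bad_def u v using bw by auto
        moreover have "(real (d u) - real (d v))^2 \<le> 1" using du sst sip by (intro sq_le1) auto
        ultimately show ?thesis by simp
      qed
    qed
  qed
  define N where "N u = {v. cadj m s u v}" for u
  have finN: "finite (N u)" for u
    by (rule finite_subset[of _ "CV m s"]) (use cadj_CV[OF ok, of u] in \<open>auto simp: N_def CV_def\<close>)
  have cardN: "card (N u) = d u" for u unfolding N_def d_def by (simp add: chain_deg_card[OF ok])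
  define X1 where "X1 = (\<lambda>v. (((0::nat),(0::nat)),v)) ` N (0,0)"
  define X2 where "X2 = (\<lambda>v. (v,((0::nat),(0::nat)))) ` N (0,0)"
  define X3 where "X3 = (\<lambda>v. (z,v)) ` N z"
  define X4 where "X4 = (\<lambda>v. (v,z)) ` N z"
  define X5 where "X5 = (\<lambda>i. ((i, s i - 1), (Suc i, 0::nat))) ` I"
  define X6 where "X6 = (\<lambda>i. ((Suc i, 0::nat), (i, s i - 1))) ` I"
  define U where "U = X1 \<union> X2 \<union> X3 \<union> X4 \<union> X5 \<union> X6"
  have finI: "finite I" unfolding I_def by auto
  have cardU: "card U \<le> 2 * d (0,0) + 2 * d z + 2 * card I"
  proof -
    have "card U \<le> card X1 + card X2 + card X3 + card X4 + card X5 + card X6"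
      unfolding U_def by (rule card_Un6)
    also have "\<dots> \<le> card (N (0,0)) + card (N (0,0)) + card (N z) + card (N z) + card I + card I"
      unfolding X1_def X2_def X3_def X4_def X5_def X6_def
      by (intro add_mono card_image_le finN finI)
    finally show ?thesis using cardN by simp
  qed
  have d0: "d (0,0) \<le> s 0 - 1" using db[of 0 0] m2 s3[of 0] by auto
  have dz: "d z \<le> s (m - 1) - 1" using db[of "m - 1" "s (m - 1) - 1"] m2 s3[of "m - 1"] unfolding z_def by auto
  have cI: "card I + s 0 \<le> s (m - 1)"
    using count_changes[OF ok, of "m - 1"] m2 unfolding I_def by auto
  have cU: "real (card U) \<le> 4 * real (s (m - 1))" using cardU d0 dz cI s3[of 0] m2 by linarith
  have sub: "{p \<in> CV m s \<times> CV m s. cadj m s (fst p) (snd p) \<and> bad (fst p) (snd p)} \<subseteq> U"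
  proof
    fix x assume x: "x \<in> {p \<in> CV m s \<times> CV m s. cadj m s (fst p) (snd p) \<and> bad (fst p) (snd p)}"
    obtain u v where xuv: "x = (u,v)" by (cases x)
    have a: "cadj m s u v" "cadj m s v u" and b: "bad u v" using x xuv cadj_sym by auto
    show "x \<in> U" using b a unfolding xuv bad_def U_def N_def X1_def X2_def X3_def X4_def X5_def X6_def by blast
  qed
  have "sigma (CV m s) (CE m s) = (\<Sum>u\<in>CV m s. \<Sum>v\<in>CV m s. if cadj m s u v then (real (d u) - real (d v))^2 else 0) / 2"
    unfolding sigma_def d_def using CE_iff[OF ok] by simp
  also have "\<dots> \<le> (\<Sum>u\<in>CV m s. \<Sum>v\<in>CV m s. if cadj m s u v \<and> bad u v then 1 else 0) / 2"
  proof (intro divide_right_mono sum_mono)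
    fix u v
    show "(if cadj m s u v then (real (d u) - real (d v))^2 else 0) \<le> (if cadj m s u v \<and> bad u v then 1 else 0)"
      using pt[of u v] by (cases "cadj m s u v") simp_all
  qed simp
  also have "(\<Sum>u\<in>CV m s. \<Sum>v\<in>CV m s. if cadj m s u v \<and> bad u v then 1 else 0)
      = (\<Sum>x\<in>CV m s \<times> CV m s. if cadj m s (fst x) (snd x) \<and> bad (fst x) (snd x) then 1 else (0::real))"
    by (simp add: sum.cartesian_product case_prod_beta)
  also have "\<dots> = real (card {p \<in> CV m s \<times> CV m s. cadj m s (fst p) (snd p) \<and> bad (fst p) (snd p)})"
    by (simp add: sum.If_cases Int_def CV_def)
  also have "\<dots> \<le> real (card U)"
  proof -
    have "finite U" unfolding U_def X1_def X2_def X3_def X4_def X5_def X6_def using finN finI by auto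
    then show ?thesis using sub by (simp add: card_mono)
  qed
  finally show ?thesis using cU by linarith
qed




lemma chain_sigma_t:
  assumes ok: "chain_ok m s" and K: "6 \<le> K"
  shows "real (3 * card {i. i < m \<and> s i = 3}) * real (K * card {i. i < m \<and> s i = K}) * (real K - 4)^2 / 2
     \<le> sigma_t (CV m s) (CE m s)"
proof -
  define d where "d u = degree (CE m s) u" for u
  define Lo where "Lo = Sigma {i. i < m \<and> s i = 3} (\<lambda>i. {..<s i})"
  define Hi where "Hi = Sigma {i. i < m \<and> s i = K} (\<lambda>i. {..<s i})"
  have cLo: "card Lo = 3 * card {i. i < m \<and> s i = 3}"
    unfolding Lo_def by (subst card_SigmaI) auto
  have cHi: "card Hi = K * card {i. i < m \<and> s i = K}"
    unfolding Hi_def by (subst card_SigmaI) auto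
  have LoV: "Lo \<subseteq> CV m s" and HiV: "Hi \<subseteq> CV m s" unfolding Lo_def Hi_def CV_def by auto
  have finV: "finite (CV m s)" unfolding CV_def by auto
  have dLo: "d u \<le> 2" if "u \<in> Lo" for u
    using that chain_deg_bounds[OF ok] unfolding Lo_def d_def by fastforce
  have dHi: "K - 2 \<le> d u" if "u \<in> Hi" for u
    using that chain_deg_bounds[OF ok] unfolding Hi_def d_def by fastforce
  have pt: "(real K - 4)^2 \<le> (real (d u) - real (d v))^2" if "u \<in> Lo" "v \<in> Hi" for u v
  proof -
    have "real K - 4 \<le> real (d v) - real (d u)" using dLo[OF that(1)] dHi[OF that(2)] K by linarith
    then have "(real K - 4)^2 \<le> (real (d v) - real (d u))^2" using K by (intro power_mono) auto
    then show ?thesis by (simp add: power2_commute)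
  qed
  have "real (card Lo) * real (card Hi) * (real K - 4)^2 = (\<Sum>u\<in>Lo. \<Sum>v\<in>Hi. (real K - 4)^2)" by simp
  also have "\<dots> \<le> (\<Sum>u\<in>Lo. \<Sum>v\<in>Hi. (real (d u) - real (d v))^2)"
    by (intro sum_mono pt)
  also have "\<dots> \<le> (\<Sum>u\<in>Lo. \<Sum>v\<in>CV m s. (real (d u) - real (d v))^2)"
    by (intro sum_mono sum_mono2 finV HiV) auto
  also have "\<dots> \<le> (\<Sum>u\<in>CV m s. \<Sum>v\<in>CV m s. (real (d u) - real (d v))^2)"
    by (intro sum_mono2 finV LoV sum_nonneg) auto
  finally have "real (card Lo) * real (card Hi) * (real K - 4)^2 \<le> 2 * sigma_t (CV m s) (CE m s)"
    unfolding sigma_t_def d_def by simp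
  then show ?thesis using cLo cHi by simp
qed

lemma chain_nonreg:
  assumes ok: "chain_ok m s" and K: "6 \<le> K" and i0: "i0 < m" "s i0 = 3" and i1: "i1 < m" "s i1 = K"
  shows "\<not> regular_graph (CV m s) (CE m s)"
proof
  assume r: "regular_graph (CV m s) (CE m s)"
  have "(i0,0) \<in> CV m s" "(i1,0) \<in> CV m s" using i0 i1 K by (auto simp: CV_def)
  then have "degree (CE m s) (i0,0) = degree (CE m s) (i1,0)" using r unfolding regular_graph_def by blast
  moreover have "degree (CE m s) (i0,0) \<le> 2" using chain_deg_bounds[OF ok i0(1)] i0 by auto
  moreover have "K - 2 \<le> degree (CE m s) (i1,0)" using chain_deg_bounds[OF ok i1(1)] i1 K by auto
  ultimately show False using K by linarith
qed




lemma star_exists: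
  fixes n :: nat
  assumes n: "3 \<le> n"
  shows "\<exists>E. connected_graph {0..<n} E \<and> \<not> regular_graph {0..<n} E"
proof -
  define E where "E = {{0, i} | i::nat. 0 < i \<and> i < n}"
  have Eiff: "{u,v} \<in> E \<longleftrightarrow> (u = 0 \<and> 0 < v \<and> v < n) \<or> (v = 0 \<and> 0 < u \<and> u < n)" for u v
  proof -
    have "{u,v} \<in> E \<longleftrightarrow> (\<exists>i. {u,v} = {0,i} \<and> 0 < i \<and> i < n)" unfolding E_def by blast
    also have "\<dots> \<longleftrightarrow> (\<exists>i. ((u = 0 \<and> v = i) \<or> (u = i \<and> v = 0)) \<and> 0 < i \<and> i < n)"
      by (simp only: doubleton_eq_iff)
    also have "\<dots> \<longleftrightarrow> (u = 0 \<and> 0 < v \<and> v < n) \<or> (v = 0 \<and> 0 < u \<and> u < n)" by blast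
    finally show ?thesis .
  qed
  have sg: "simple_graph {0..<n} E"
    unfolding simple_graph_def E_def by auto
  have R: "(u,v) \<in> adj_rel E \<longleftrightarrow> (u = 0 \<and> 0 < v \<and> v < n) \<or> (v = 0 \<and> 0 < u \<and> u < n)" for u v
    by (simp add: adj_rel_def Eiff)
  have to0: "(u,0) \<in> (adj_rel E)\<^sup>*" if "u < n" for u
    using that R[of u 0] by (cases "u = 0") (auto intro: r_into_rtrancl)
  have from0: "(0,u) \<in> (adj_rel E)\<^sup>*" if "u < n" for u
    using that R[of 0 u] by (cases "u = 0") (auto intro: r_into_rtrancl)
  have cg: "connected_graph {0..<n} E"
    unfolding connected_graph_def
  proof (intro conjI ballI sg)
    show "{0..<n} \<noteq> {}" using n by auto
    fix u v assume "u \<in> {0..<n}" "v \<in> {0..<n}"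
    then have "(u,0) \<in> (adj_rel E)\<^sup>*" "(0,v) \<in> (adj_rel E)\<^sup>*" using to0 from0 by auto
    then show "(u,v) \<in> (adj_rel E)\<^sup>*" by (rule rtrancl_trans)
  qed
  have d0: "degree E 0 = n - 1"
  proof -
    have "{v \<in> {0..<n}. {0,v} \<in> E} = {1..<n}"
    proof (rule set_eqI)
      fix v show "v \<in> {v \<in> {0..<n}. {0,v} \<in> E} \<longleftrightarrow> v \<in> {1..<n}" using Eiff[of 0 v] by auto
    qed
    then show ?thesis using deg_nbrs[OF sg, of 0] by simp
  qed
  have d1: "degree E 1 = 1"
  proof -
    have "{v \<in> {0..<n}. {1,v} \<in> E} = {0}"
    proof (rule set_eqI)
      fix v show "v \<in> {v \<in> {0..<n}. {1,v} \<in> E} \<longleftrightarrow> v \<in> {0}" using Eiff[of 1 v] n by auto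
    qed
    then show ?thesis using deg_nbrs[OF sg, of 1] by simp
  qed
  have "\<not> regular_graph {0..<n} E"
  proof
    assume "regular_graph {0..<n} E"
    then have "degree E 0 = degree E 1" unfolding regular_graph_def using n by auto
    then show False using d0 d1 n by simp
  qed
  then show ?thesis using cg by blast
qed

lemma fmax_fin:
  fixes n :: nat
  shows "finite {sigma_t {0..<n} E / sigma {0..<n} E | E.
       connected_graph {0..<n} E \<and> \<not> regular_graph {0..<n} E}"
proof -
  have "{E. connected_graph {0..<(n::nat)} E \<and> \<not> regular_graph {0..<n} E} \<subseteq> Pow (Pow {0..<n})"
    by (auto simp: connected_graph_def simple_graph_def)
  then have "finite {E. connected_graph {0..<(n::nat)} E \<and> \<not> regular_graph {0..<n} E}"
    by (rule finite_subset) simp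
  then have "finite ((\<lambda>E. sigma_t {0..<n} E / sigma {0..<n} E) ` {E. connected_graph {0..<(n::nat)} E \<and> \<not> regular_graph {0..<n} E})"
    by simp
  moreover have "{sigma_t {0..<n} E / sigma {0..<n} E | E.
       connected_graph {0..<n} E \<and> \<not> regular_graph {0..<n} E} = (\<lambda>E. sigma_t {0..<n} E / sigma {0..<n} E) ` {E. connected_graph {0..<(n::nat)} E \<and> \<not> regular_graph {0..<n} E}"
    by auto
  ultimately show ?thesis by simp
qed

lemma fmax_ge:
  fixes n :: nat
  assumes "connected_graph {0..<n} E" "\<not> regular_graph {0..<n} E"
  shows "sigma_t {0..<n} E / sigma {0..<n} E \<le> f_max n"
  unfolding f_max_def by (rule Max_ge[OF fmax_fin]) (use assms in blast)

lemma fmax_le: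
  fixes n :: nat
  assumes n: "3 \<le> n" and B: "\<And>E. connected_graph {0..<n} E \<Longrightarrow> \<not> regular_graph {0..<n} E \<Longrightarrow>
     sigma_t {0..<n} E / sigma {0..<n} E \<le> b"
  shows "f_max n \<le> b"
  unfolding f_max_def
proof (rule Max.boundedI[OF fmax_fin])
  obtain E where "connected_graph {0..<n} E \<and> \<not> regular_graph {0..<n} E" using star_exists[OF n] by blast
  then show "{sigma_t {0..<n} E / sigma {0..<n} E | E.
       connected_graph {0..<n} E \<and> \<not> regular_graph {0..<n} E} \<noteq> {}" by blast
qed (use B in blast)




lemma sum_split_shift: "sum f {..<x+y} = sum f {..<x} + sum (\<lambda>i. f (x+i)) {..<(y::nat)}"
  by (induction y) (auto simp: add.assoc)

lemma chain_instance:
  fixes a b K c m :: nat and s :: "nat \<Rightarrow> nat"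
  assumes a1: "1 \<le> a" and b2: "b \<le> 2" and K6: "6 \<le> K" and c1: "1 \<le> c"
  and s_def: "s = (\<lambda>i. if i < a then 3 else if i < a + b then 4 else if i < a + b + (K - 4) then i - (a + b) + 4 else K)"
    and m_def: "m = a + b + (K - 4) + c"
  shows "chain_ok m s" "card (CV m s) = 3 * a + 4 * b + (\<Sum>i<K-4. i + 4) + c * K"
    "a \<le> card {i. i < m \<and> s i = 3}" "c \<le> card {i. i < m \<and> s i = K}"
    "0 < m" "s 0 = 3" "s (m - 1) = K"
proof -
  show ok: "chain_ok m s" unfolding chain_ok_def s_def m_def using a1 c1 K6 by (auto split: if_splits)
  have "card (CV m s) = (\<Sum>i<m. s i)" unfolding CV_def by (subst card_SigmaI) auto
  also have "\<dots> = (\<Sum>i<a. s i) + (\<Sum>i<b. s (a + i)) + (\<Sum>i<K-4. s (a + b + i)) + (\<Sum>i<c. s (a + b + (K - 4) + i))"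
    unfolding m_def sum_split_shift by simp
  also have "(\<Sum>i<a. s i) = 3 * a" unfolding s_def by simp
  also have "(\<Sum>i<b. s (a + i)) = 4 * b" unfolding s_def by simp
  also have "(\<Sum>i<K-4. s (a + b + i)) = (\<Sum>i<K-4. i + 4)" unfolding s_def by (intro sum.cong) auto
  also have "(\<Sum>i<c. s (a + b + (K - 4) + i)) = c * K" unfolding s_def by simp
  finally show "card (CV m s) = 3 * a + 4 * b + (\<Sum>i<K-4. i + 4) + c * K" .
  have "{..<a} \<subseteq> {i. i < m \<and> s i = 3}" unfolding s_def m_def by auto
  then show "a \<le> card {i. i < m \<and> s i = 3}" by (metis card_lessThan card_mono finite_Collect_conjI finite_lessThan lessThan_def)
  have "{a + b + (K - 4)..<m} \<subseteq> {i. i < m \<and> s i = K}" unfolding s_def m_def by auto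
  then show "c \<le> card {i. i < m \<and> s i = K}"
    by (metis card_atLeastLessThan card_mono finite_Collect_conjI finite_lessThan lessThan_def m_def add_diff_cancel_left')
  show "0 < m" unfolding m_def using a1 by simp
  show "s 0 = 3" unfolding s_def using a1 by simp
  show "s (m - 1) = K" unfolding s_def m_def using c1 by auto
qed



lemma ratio_le:
  assumes "sigma_t V E \<le> B * sigma V E" "0 \<le> B"
  shows "sigma_t V E / sigma V E \<le> B"
proof (cases "sigma V E = 0")
  case True then show ?thesis using assms by simp
next
  case False
  then have "0 < sigma V E" using sigma_nonneg[of V E] by simp
  then show ?thesis using assms by (simp add: pos_divide_le_eq)
qed

lemma lower_exists:
  fixes n :: nat
  assumes n: "1600 \<le> n"
  shows "\<exists>E. connected_graph {0..<n} E \<and> \<not> regular_graph {0..<n} E \<and>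
     (1/768) * real n powr (5/2) \<le> sigma_t {0..<n} E / sigma {0..<n} E"
proof -
  define x where "x = sqrt (real n)"
  have x40: "40 \<le> x" unfolding x_def using n by (simp add: real_le_rsqrt)
  have xsq: "x^2 = real n" unfolding x_def by simp
  define K where "K = nat \<lfloor>x/2\<rfloor>"
  have fl0: "0 \<le> \<lfloor>x/2\<rfloor>" using x40 by simp
  have rK: "real K = real_of_int \<lfloor>x/2\<rfloor>" unfolding K_def using fl0 by simp
  have Kle: "real K \<le> x/2" unfolding rK by (rule of_int_floor_le)
  have Kge: "x/2 - 1 < real K" unfolding rK using real_of_int_floor_add_one_gt[of "x/2"] by linarith
  have K6: "6 \<le> K" using Kge x40 by linarith
  define c where "c = n div (3 * K)"
  have dm: "n = 3 * K * c + n mod (3 * K)" unfolding c_def by simp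
  have md: "n mod (3 * K) < 3 * K" using K6 by simp
  have cK: "3 * K * c \<le> n" using dm by linarith
  have cK2: "n < 3 * K * (c + 1)" using dm md by (simp add: algebra_simps)
  define T where "T = (\<Sum>i<K-4. i + 4)"
  have T: "T \<le> (K - 4) * K"
  proof -
    have "\<forall>i\<in>{..<K-4}. i + 4 \<le> K" using K6 by auto
    then have "T \<le> of_nat (card {..<K-4}) * K" unfolding T_def by (intro sum_bounded_above) auto
    then show ?thesis by simp
  qed
  have KKn: "4 * (K * K) \<le> n"
  proof -
    have "real K * real K \<le> (x/2) * (x/2)" using Kle K6 by (intro mult_mono) auto
    then have "4 * (real K * real K) \<le> x^2" by (simp add: power2_eq_square)
    then have "real (4 * (K * K)) \<le> real n" using xsq by simp
    then show ?thesis by (simp only: of_nat_le_iff)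
  qed
  define R where "R = n - T - c * K"
  have TcK12: "12 * (T + c * K) \<le> 7 * n"
  proof -
    have "(K - 4) * K \<le> K * K" by simp
    then have "12 * T \<le> 3 * n" using T KKn by linarith
    moreover have "12 * (c * K) \<le> 4 * n" using cK by (simp add: mult.commute mult.left_commute)
    ultimately show ?thesis unfolding add_mult_distrib2 by linarith
  qed
  have TcK12': "12 * T + 12 * (c * K) \<le> 7 * n" using TcK12 unfolding add_mult_distrib2 .
  have TcK: "T + c * K \<le> n" using TcK12' by linarith
  have R12: "5 * n \<le> 12 * R" unfolding R_def using TcK12' TcK by linarith
  define b where "b = R mod 3"
  define a where "a = R div 3 - b"
  have b2: "b \<le> 2" unfolding b_def by linarith
  have R9: "9 \<le> R" using R12 n by linarith
  have a1: "1 \<le> a" unfolding a_def b_def using R9 by linarith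
  have abR: "3 * a + 4 * b = R"
  proof -
    have q: "R = 3 * (R div 3) + R mod 3" by simp
    have "R mod 3 \<le> R div 3" using R9 by linarith
    then show ?thesis unfolding a_def b_def using q b2 unfolding b_def by linarith
  qed
  have c1: "1 \<le> c"
  proof -
    have "3 * K \<le> K * K" using K6 by (intro mult_le_mono1) linarith
    then have nK: "3 * K \<le> n" using KKn by linarith
    have "(3 * K) div (3 * K) \<le> n div (3 * K)" using nK by (rule div_le_mono)
    then show ?thesis unfolding c_def using K6 by simp
  qed
  define s where "s = (\<lambda>i. if i < a then 3 else if i < a + b then 4 else if i < a + b + (K - 4) then i - (a + b) + 4 else K)"
  define m where "m = a + b + (K - 4) + c"
  note ci = chain_instance[OF a1 b2 K6 c1 s_def m_def]
  have ok: "chain_ok m s" by (rule ci(1))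
  have cardV: "card (CV m s) = n" using ci(2) abR unfolding T_def[symmetric] R_def using TcK by linarith
  have cg: "connected_graph (CV m s) (CE m s)" by (rule chain_conn[OF ok])
  have nr: "\<not> regular_graph (CV m s) (CE m s)"
    by (rule chain_nonreg[OF ok K6, of 0 "m - 1"]) (use ci in auto)
  have sT: "real (3 * card {i. i < m \<and> s i = 3}) * real (K * card {i. i < m \<and> s i = K}) * (real K - 4)^2 / 2
     \<le> sigma_t (CV m s) (CE m s)" by (rule chain_sigma_t[OF ok K6])
  define Lv where "Lv = real (3 * a) * real (K * c) * (real K - 4)^2 / 2"
  have LvT: "Lv \<le> sigma_t (CV m s) (CE m s)"
  proof -
    have "real (3 * a) * real (K * c) * (real K - 4)^2 / 2 \<le>
      real (3 * card {i. i < m \<and> s i = 3}) * real (K * card {i. i < m \<and> s i = K}) * (real K - 4)^2 / 2"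
    proof -
      have "real (3 * a) \<le> real (3 * card {i. i < m \<and> s i = 3})" using ci(3) by simp
      moreover have "real (K * c) \<le> real (K * card {i. i < m \<and> s i = K})"
        using ci(4) by (simp only: of_nat_le_iff mult_le_mono2)
      ultimately show ?thesis by (intro divide_right_mono mult_right_mono mult_mono) auto
    qed
    then show ?thesis using sT unfolding Lv_def by linarith
  qed
  have sS: "sigma (CV m s) (CE m s) \<le> 2 * real K" using chain_sigma[OF ok] ci(7) by simp
  have Lv0: "0 < Lv" unfolding Lv_def using a1 c1 K6 by simp
  have Spos: "0 < sigma (CV m s) (CE m s)"
  proof (rule ccontr)
    assume "\<not> 0 < sigma (CV m s) (CE m s)"
    then have "sigma (CV m s) (CE m s) = 0" using sigma_nonneg[of "CV m s" "CE m s"] by linarith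
    then have "sigma_t (CV m s) (CE m s) \<le> 0" using upper[OF cg] by simp
    then show False using LvT Lv0 by linarith
  qed
  have ratio: "Lv / (2 * real K) \<le> sigma_t (CV m s) (CE m s) / sigma (CV m s) (CE m s)"
  proof -
    have "Lv / (2 * real K) \<le> Lv / sigma (CV m s) (CE m s)"
      using Lv0 Spos sS by (intro divide_left_mono) auto
    also have "\<dots> \<le> sigma_t (CV m s) (CE m s) / sigma (CV m s) (CE m s)"
      using LvT Spos by (intro divide_right_mono) auto
    finally show ?thesis .
  qed
  have bound: "(1/768) * real n powr (5/2) \<le> Lv / (2 * real K)"
  proof -
    have Kpos: "0 < real K" using K6 by simp
    have e1: "Lv / (2 * real K) = real (3 * a) * real c * (real K - 4)^2 / 4"
      unfolding Lv_def using Kpos by (simp add: field_simps)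
    have h1: "real n / 4 \<le> real (3 * a)"
    proof -
      have "real (3 * a + 4 * b) = real R" using abR by (simp only:)
      then have "real (3 * a) = real R - 4 * real b" by simp
      then show ?thesis using R12 b2 n by linarith
    qed
    have h2: "x / 3 \<le> real c"
    proof -
      have "real n < real (3 * K * (c + 1))" using cK2 by (simp only: of_nat_less_iff)
      then have "real n < 3 * real K * (real c + 1)" by (simp add: algebra_simps)
      also have "\<dots> \<le> 3 * (x/2) * (real c + 1)" using Kle by (intro mult_right_mono) auto
      finally have "x * x < 3 * (x/2) * (real c + 1)" using xsq by (simp add: power2_eq_square)
      then have "x * x < x * (3/2 * (real c + 1))" by (simp add: algebra_simps)
      then have "x < 3/2 * (real c + 1)" using x40 by (simp add: mult_less_cancel_left)
      then have "x < 3/2 * real c + 3/2" by (simp add: algebra_simps)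
      then show ?thesis using x40 by linarith
    qed
    have h3: "x / 4 \<le> real K - 4" using Kge x40 by linarith
    have h3': "(x/4)^2 \<le> (real K - 4)^2" using h3 x40 by (intro power_mono) auto
    have ineq: "real n / 4 * (x / 3) * (x/4)^2 / 4 \<le> real (3 * a) * real c * (real K - 4)^2 / 4"
      using h1 h2 h3' x40 by (intro divide_right_mono mult_mono) auto
    have eq1: "real n / 4 * (x / 3) * (x/4)^2 / 4 = (1/768) * (real n * real n * x)"
      using xsq by (simp add: power2_eq_square field_simps)
    have eq2: "real n powr (5/2) = real n * real n * x"
    proof -
      have "real n powr (5/2) = real n powr (2 + 1/2)" by simp
      also have "\<dots> = real n powr 2 * real n powr (1/2)" by (rule powr_add)
      also have "\<dots> = real n * real n * x" unfolding x_def using n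
        by (simp add: powr_half_sqrt power2_eq_square powr_realpow[symmetric])
      finally show ?thesis .
    qed
    have "(1/768) * real n powr (5/2) = real n / 4 * (x / 3) * (x/4)^2 / 4" unfolding eq2 using eq1 by linarith
    then show ?thesis using ineq e1 by linarith
  qed
  have finCV: "finite (CV m s)" unfolding CV_def by auto
  obtain h where h: "bij_betw h (CV m s) {0..<card (CV m s)}" using ex_bij_betw_finite_nat[OF finCV] by blast
  have isoR: "connected_graph {0..<n} ((`) h ` CE m s) \<and> \<not> regular_graph {0..<n} ((`) h ` CE m s)
     \<and> sigma {0..<n} ((`) h ` CE m s) = sigma (CV m s) (CE m s) \<and> sigma_t {0..<n} ((`) h ` CE m s) = sigma_t (CV m s) (CE m s)"
    using iso[OF h cg nr] cardV by simp
  have "(1/768) * real n powr (5/2) \<le> sigma_t {0..<n} ((`) h ` CE m s) / sigma {0..<n} ((`) h ` CE m s)"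
    using isoR ratio bound by (simp only:)
  then show ?thesis using isoR by blast
qed



theorem theorem3:
  shows "(\<forall>n::nat. n \<ge> 3 \<longrightarrow> f_max n \<le> sqrt 1.5 * real n powr (5/2))
    \<and> (\<exists>c>0. \<exists>N. \<forall>n::nat. n \<ge> N \<longrightarrow> f_max n \<ge> c * real n powr (5/2))
    \<and> (\<forall>(V::'a set) E. connected_graph V E \<longrightarrow>
          sigma_t V E \<le> sqrt 1.5 * real (card V) powr (5/2) * sigma V E)"
proof (intro conjI)
  show "\<forall>(V::'a set) E. connected_graph V E \<longrightarrow>
          sigma_t V E \<le> sqrt 1.5 * real (card V) powr (5/2) * sigma V E"
    using upper by blast
  show "\<forall>n::nat. n \<ge> 3 \<longrightarrow> f_max n \<le> sqrt 1.5 * real n powr (5/2)"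
  proof (intro allI impI)
    fix n :: nat assume n: "3 \<le> n"
    show "f_max n \<le> sqrt 1.5 * real n powr (5/2)"
    proof (rule fmax_le[OF n])
      fix E assume cg: "connected_graph {0..<n} E"
      have "sigma_t {0..<n} E \<le> sqrt 1.5 * real n powr (5/2) * sigma {0..<n} E"
        using upper[OF cg] by simp
      then show "sigma_t {0..<n} E / sigma {0..<n} E \<le> sqrt 1.5 * real n powr (5/2)"
        by (rule ratio_le) simp
    qed
  qed
  show "\<exists>c>0. \<exists>N. \<forall>n::nat. n \<ge> N \<longrightarrow> f_max n \<ge> c * real n powr (5/2)"
  proof (intro exI[of _ "1/768"] conjI exI[of _ "1600::nat"] allI impI)
    fix n :: nat assume n: "1600 \<le> n"
    obtain E where E: "connected_graph {0..<n} E" "\<not> regular_graph {0..<n} E"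
      "(1/768) * real n powr (5/2) \<le> sigma_t {0..<n} E / sigma {0..<n} E"
      using lower_exists[OF n] by blast
    show "(1/768) * real n powr (5/2) \<le> f_max n"
      using E(3) fmax_ge[OF E(1) E(2)] by linarith
  qed simp
qed

end
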